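(* Let $\mathfrak{C}=(U,M,I,N,J)$ be a formal decision context. Then the set of necessary I-decision rules of $\mathfrak{C}$ is $$\overline{\mathfrak{R}}_{I}(\mathfrak{C})=\{(O^{\square_M\lozenge_M},O^{\square_M})\rightarrow(\cap[O]_{R_2},(\cap[O]_{R_2})^{\uparrow_N})\mid O\in\mathrm{Ext}L(\mathfrak{C}_N),\ O\ne U,\ O^{\square_M\lozenge_M}\neq\emptyset\}.$$
   Context: Formal context $(U,M,I)$: $U$ and $M$ are finite nonempty sets and $I\subseteq U\times M$. For $O\subseteq U$ and $C\subseteq M$ define: - $O^{\uparrow}=\{a\in M\mid \forall x\in O\,((x,a)\in I)\}$ and $C^{\downarrow}=\{x\in U\mid \forall a\in C\,((x,a)\in I)\}$; - $O^{\square}=\{a\in M\mid \forall x\in U\,((x,a)\in I\Rightarrow x\in O)\}$ and $C^{\lozenge}=\{x\in U\mid \exists a\in C\,((x,a)\in I)\}$. A formal concept is a pair $(O,C)$ with $O^\uparrow=C$ and $C^\downarrow=O$ (set $L$). An object-oriented concept is a pair $(O,C)$ with $O^\square=C$ and $C^\lozenge=O$ (set $L_O$). $\mathrm{Ext}$ denotes the set of extents. Standing assumption: contexts are canonical, i.e. for all $x\in U$ and $a\in M$ we have $\{x\}^\uparrow\notin\{\emptyset,M\}$ and $\{a\}^\downarrow\notin\{\emptyset,U\}$. A formal decision context $\mathfrak{C}=(U,M,I,N,J)$ has conditional context $\mathfrak{C}_M=(U,M,I)$ and decision context $\mathfrak{C}_N=(U,N,J)$, with $M\cap N=\emptyset$.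 Operators carry the subscript $M$ or $N$ according to the context in which they are computed. An I-decision rule is $(O,C)\rightarrow(Y,D)$ with $(O,C)\in L_O(\mathfrak{C}_M)$, $(Y,D)\in L(\mathfrak{C}_N)$, $O\subseteq Y$, $O\ne\emptyset$ and $Y\ne U$; the set of these is $\mathfrak{R}_I(\mathfrak{C})$. Implication: $(O_1,C_1)\rightarrow(Y_1,D_1)\Rightarrow(O_2,C_2)\rightarrow(Y_2,D_2)$ iff $O_2\subseteq O_1\subseteq Y_1\subseteq Y_2$. A rule $r$ is necessary if there is no $r_1\in\mathfrak{R}_I(\mathfrak{C})$ with $r_1\ne r$ and $r_1\Rightarrow r$. $R_2$ is the equivalence relation on $\mathrm{Ext}L(\mathfrak{C}_N)$ given by $(O,Y)\in R_2$ iff $O^{\square_M}=Y^{\square_M}$. $[O]_{R_2}$ is the class of $O$, and $\cap[O]_{R_2}$ is the intersection of its members. *)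

theory Defs
  imports Main
begin

definition fc_context :: "'u set \<Rightarrow> 'm set \<Rightarrow> ('u \<times> 'm) set \<Rightarrow> bool" where
  "fc_context U M I \<longleftrightarrow> finite U \<and> finite M \<and> U \<noteq> {} \<and> M \<noteq> {} \<and> I \<subseteq> U \<times> M"

definition up :: "'u set \<Rightarrow> 'm set \<Rightarrow> ('u \<times> 'm) set \<Rightarrow> 'u set \<Rightarrow> 'm set" where
  "up U M I X = {a \<in> M. \<forall>x \<in> X. (x, a) \<in> I}"

definition down :: "'u set \<Rightarrow> 'm set \<Rightarrow> ('u \<times> 'm) set \<Rightarrow> 'm set \<Rightarrow> 'u set" where
  "down U M I C = {x \<in> U. \<forall>a \<in> C. (x, a) \<in> I}"

definition box :: "'u set \<Rightarrow> 'm set \<Rightarrow> ('u \<times> 'm) set \<Rightarrow> 'u set \<Rightarrow> 'm set" where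
  "box U M I X = {a \<in> M. \<forall>x \<in> U. (x, a) \<in> I \<longrightarrow> x \<in> X}"

definition dia :: "'u set \<Rightarrow> 'm set \<Rightarrow> ('u \<times> 'm) set \<Rightarrow> 'm set \<Rightarrow> 'u set" where
  "dia U M I C = {x \<in> U. \<exists>a \<in> C. (x, a) \<in> I}"

definition canonical :: "'u set \<Rightarrow> 'm set \<Rightarrow> ('u \<times> 'm) set \<Rightarrow> bool" where
  "canonical U M I \<longleftrightarrow>
     (\<forall>x \<in> U. up U M I {x} \<notin> {{}, M}) \<and> (\<forall>a \<in> M. down U M I {a} \<notin> {{}, U})"

definition concepts :: "'u set \<Rightarrow> 'm set \<Rightarrow> ('u \<times> 'm) set \<Rightarrow> ('u set \<times> 'm set) set" where
  "concepts U M I = {(X, C). X \<subseteq> U \<and> C \<subseteq> M \<and> up U M I X = C \<and> down U M I C = X}"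

definition oo_concepts :: "'u set \<Rightarrow> 'm set \<Rightarrow> ('u \<times> 'm) set \<Rightarrow> ('u set \<times> 'm set) set" where
  "oo_concepts U M I = {(X, C). X \<subseteq> U \<and> C \<subseteq> M \<and> box U M I X = C \<and> dia U M I C = X}"

definition extents :: "'u set \<Rightarrow> 'm set \<Rightarrow> ('u \<times> 'm) set \<Rightarrow> 'u set set" where
  "extents U M I = fst ` concepts U M I"

type_synonym ('u, 'm, 'n) rule = "('u set \<times> 'm set) \<times> ('u set \<times> 'n set)"

definition I_rules ::
  "'u set \<Rightarrow> 'm set \<Rightarrow> ('u \<times> 'm) set \<Rightarrow> 'n set \<Rightarrow> ('u \<times> 'n) set \<Rightarrow> ('u, 'm, 'n) rule set" where
  "I_rules U M I N J = {((X, C), (Y, D)).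
      (X, C) \<in> oo_concepts U M I \<and> (Y, D) \<in> concepts U N J \<and> X \<subseteq> Y \<and> X \<noteq> {} \<and> Y \<noteq> U}"

definition rule_implies :: "('u, 'm, 'n) rule \<Rightarrow> ('u, 'm, 'n) rule \<Rightarrow> bool" where
  "rule_implies r1 r2 \<longleftrightarrow>
     fst (fst r2) \<subseteq> fst (fst r1) \<and> fst (fst r1) \<subseteq> fst (snd r1) \<and> fst (snd r1) \<subseteq> fst (snd r2)"

definition necessary_I_rules ::
  "'u set \<Rightarrow> 'm set \<Rightarrow> ('u \<times> 'm) set \<Rightarrow> 'n set \<Rightarrow> ('u \<times> 'n) set \<Rightarrow> ('u, 'm, 'n) rule set" where
  "necessary_I_rules U M I N J = {r \<in> I_rules U M I N J.
      \<not> (\<exists>r1 \<in> I_rules U M I N J. r1 \<noteq> r \<and> rule_implies r1 r)}"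

definition R2_class ::
  "'u set \<Rightarrow> 'm set \<Rightarrow> ('u \<times> 'm) set \<Rightarrow> 'n set \<Rightarrow> ('u \<times> 'n) set \<Rightarrow> 'u set \<Rightarrow> 'u set set" where
  "R2_class U M I N J X = {Y \<in> extents U N J. box U M I Y = box U M I X}"

end

theory Submission
  imports Defs
begin

lemma up_sub: "up U N J P \<subseteq> N" by (auto simp: up_def)
lemma down_sub: "down U N J D \<subseteq> U" by (auto simp: down_def)
lemma box_sub: "box U M I P \<subseteq> M" by (auto simp: box_def)
lemma dia_sub: "dia U M I C \<subseteq> U" by (auto simp: dia_def)

lemma ext_iff: "Y \<in> extents U N J \<longleftrightarrow> Y \<subseteq> U \<and> down U N J (up U N J Y) = Y"
  unfolding extents_def concepts_def using up_sub[of U N J] by (auto simp: image_iff)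

lemma cl_ext: "P \<subseteq> U \<Longrightarrow> P \<subseteq> down U N J (up U N J P)"
  unfolding up_def down_def by blast

lemma cl_min: "Y \<in> extents U N J \<Longrightarrow> P \<subseteq> Y \<Longrightarrow> down U N J (up U N J P) \<subseteq> Y"
proof -
  assume Y: "Y \<in> extents U N J" and PY: "P \<subseteq> Y"
  have "up U N J Y \<subseteq> up U N J P" using PY unfolding up_def by blast
  hence "down U N J (up U N J P) \<subseteq> down U N J (up U N J Y)" unfolding down_def by blast
  thus ?thesis using Y unfolding ext_iff by simp
qed

lemma cl_is_ext: "down U N J (up U N J P) \<in> extents U N J"
proof -
  let ?Q = "down U N J (up U N J P)"
  have 1: "up U N J P \<subseteq> up U N J ?Q" unfolding up_def down_def by blast
  have 2: "down U N J (up U N J ?Q) \<subseteq> ?Q"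
  proof
    fix x assume "x \<in> down U N J (up U N J ?Q)"
    thus "x \<in> ?Q" using 1 unfolding down_def by blast
  qed
  have 3: "?Q \<subseteq> down U N J (up U N J ?Q)"
  proof
    fix x assume x: "x \<in> ?Q"
    hence "x \<in> U" unfolding down_def by blast
    moreover have "\<forall>a \<in> up U N J ?Q. (x, a) \<in> J" using x unfolding up_def by blast
    ultimately show "x \<in> down U N J (up U N J ?Q)" unfolding down_def by blast
  qed
  have "?Q \<subseteq> U" by (rule down_sub)
  with 2 3 show ?thesis unfolding ext_iff by blast
qed

lemma box_mono: "A \<subseteq> B \<Longrightarrow> box U M I A \<subseteq> box U M I B"
  by (auto simp: box_def)

lemma dia_box_sub: "dia U M I (box U M I Y) \<subseteq> Y"
  by (auto simp: box_def dia_def)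

lemma box_dia_sup: "C \<subseteq> M \<Longrightarrow> C \<subseteq> box U M I (dia U M I C)"
  by (auto simp: box_def dia_def)

lemma box_dia_box: "box U M I (dia U M I (box U M I X)) = box U M I X"
  by (rule subset_antisym[OF box_mono[OF dia_box_sub[of U M I X]] box_dia_sup[OF box_sub[of U M I X]]])

lemma dia_mono: "A \<subseteq> B \<Longrightarrow> dia U M I A \<subseteq> dia U M I B"
  unfolding dia_def by blast

lemma oo_max: "(P, C) \<in> oo_concepts U M I \<Longrightarrow> P \<subseteq> Y \<Longrightarrow> P \<subseteq> dia U M I (box U M I Y)"
proof -
  assume oc: "(P, C) \<in> oo_concepts U M I" and PY: "P \<subseteq> Y"
  have "C = box U M I P" "P = dia U M I C" using oc unfolding oo_concepts_def by auto
  moreover have "box U M I P \<subseteq> box U M I Y" using PY by (rule box_mono)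
  ultimately show ?thesis using dia_mono[of "box U M I P" "box U M I Y" U M I] by simp
qed

lemma key:
  assumes X: "X \<in> extents U N J"
  shows "\<Inter> (R2_class U M I N J X) = down U N J (up U N J (dia U M I (box U M I X)))"
    (is "?L = ?R")
proof
  let ?P = "dia U M I (box U M I X)"
  have memX: "X \<in> R2_class U M I N J X" using X by (simp add: R2_class_def)
  have OL: "?P \<subseteq> ?L"
  proof
    fix x assume x: "x \<in> ?P"
    show "x \<in> ?L"
    proof
      fix Y assume "Y \<in> R2_class U M I N J X"
      then have "box U M I Y = box U M I X" by (simp add: R2_class_def)
      hence "x \<in> dia U M I (box U M I Y)" using x by simp
      thus "x \<in> Y" using dia_box_sub[of U M I Y] by (rule rev_subsetD)
    qed
  qed
  have Ls: "?L \<subseteq> X" using memX by (rule Inter_lower)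
  have "?R \<in> R2_class U M I N J X"
  proof -
    have "?P \<subseteq> X" using OL Ls by (rule subset_trans)
    hence "?R \<subseteq> X" by (rule cl_min[OF X])
    hence a: "box U M I ?R \<subseteq> box U M I X" by (rule box_mono)
    have "?P \<subseteq> ?R" by (rule cl_ext[OF dia_sub])
    hence "box U M I ?P \<subseteq> box U M I ?R" by (rule box_mono)
    hence "box U M I X \<subseteq> box U M I ?R" using box_dia_box[of U M I X] by simp
    with a have "box U M I ?R = box U M I X" by (rule subset_antisym)
    thus ?thesis using cl_is_ext[of U N J ?P] unfolding R2_class_def by simp
  qed
  thus "?L \<subseteq> ?R" by (rule Inter_lower)
  show "?R \<subseteq> ?L"
  proof
    fix x assume x: "x \<in> ?R"
    show "x \<in> ?L"
    proof
      fix Y assume Y: "Y \<in> R2_class U M I N J X"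
      hence "box U M I Y = box U M I X" "Y \<in> extents U N J" by (auto simp: R2_class_def)
      hence "?P \<subseteq> Y" using dia_box_sub[of U M I Y] by simp
      hence "?R \<subseteq> Y" by (rule cl_min[OF \<open>Y \<in> extents U N J\<close>])
      thus "x \<in> Y" using x by (rule subsetD)
    qed
  qed
qed


lemma conc_iff: "(Y, D) \<in> concepts U N J \<longleftrightarrow> Y \<in> extents U N J \<and> D = up U N J Y"
  unfolding ext_iff concepts_def using up_sub[of U N J] by auto

lemma oo_box: "(P, C) \<in> oo_concepts U M I \<Longrightarrow> C = box U M I P"
  unfolding oo_concepts_def by auto

lemma oo_canon: "(dia U M I (box U M I X), box U M I X) \<in> oo_concepts U M I"
  unfolding oo_concepts_def by (simp add: box_dia_box dia_sub box_sub)

theorem theorem3p7: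
  fixes U :: "'u set" and M :: "'m set" and I :: "('u \<times> 'm) set"
    and N :: "'n set" and J :: "('u \<times> 'n) set"
  assumes "fc_context U M I" and "fc_context U N J"
    and "canonical U M I" and "canonical U N J"
  shows "necessary_I_rules U M I N J =
    {((dia U M I (box U M I X), box U M I X),
      (\<Inter> (R2_class U M I N J X), up U N J (\<Inter> (R2_class U M I N J X)))) | X.
       X \<in> extents U N J \<and> X \<noteq> U \<and> dia U M I (box U M I X) \<noteq> {}}"
  (is "?A = ?B")
proof
  show "?A \<subseteq> ?B"
  proof
    fix r assume r: "r \<in> ?A"
    obtain P C Y D where rr: "r = ((P, C), (Y, D))" by (cases r) auto
    from r have rI: "r \<in> I_rules U M I N J"
      and nec0: "\<not> (\<exists>r1 \<in> I_rules U M I N J. r1 \<noteq> r \<and> rule_implies r1 r)"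
      unfolding necessary_I_rules_def by blast+
    from rI rr have oc: "(P, C) \<in> oo_concepts U M I" and yd: "(Y, D) \<in> concepts U N J"
      and OY: "P \<subseteq> Y" and On: "P \<noteq> {}" and YU: "Y \<noteq> U"
      unfolding rr I_rules_def by simp_all
    have nec: "\<And>r1. r1 \<in> I_rules U M I N J \<Longrightarrow> rule_implies r1 r \<Longrightarrow> r1 = r"
      using nec0 by blast
    from yd have Ye: "Y \<in> extents U N J" and D: "D = up U N J Y" by (simp_all add: conc_iff)
    have C: "C = box U M I P" using oo_box[OF oc] .
    have O1: "P \<subseteq> dia U M I (box U M I Y)" using oo_max[OF oc OY] .
    let ?r1 = "((dia U M I (box U M I Y), box U M I Y), (Y, D))"
    have "?r1 \<in> I_rules U M I N J"
    proof -
      have "dia U M I (box U M I Y) \<noteq> {}" using O1 On by blast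
      thus ?thesis using oo_canon[of U M I Y] yd dia_box_sub[of U M I Y] YU
        by (simp add: I_rules_def)
    qed
    moreover have "rule_implies ?r1 r" unfolding rr rule_implies_def
      using O1 dia_box_sub[of U M I Y] by simp
    ultimately have "?r1 = r" by (rule nec)
    hence eqr: "?r1 = ((P, C), (Y, D))" unfolding rr .
    have Oeq: "P = dia U M I (box U M I Y)" using arg_cong[OF eqr, of "\<lambda>r. fst (fst r)"] by simp
    have Ceq: "C = box U M I Y" using arg_cong[OF eqr, of "\<lambda>r. snd (fst r)"] by simp
    let ?cl = "down U N J (up U N J P)"
    let ?r2 = "((P, C), (?cl, up U N J ?cl))"
    have clY: "?cl \<subseteq> Y" using cl_min[OF Ye OY] .
    have Osub: "P \<subseteq> U" using oc unfolding oo_concepts_def by auto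
    have cc: "(?cl, up U N J ?cl) \<in> concepts U N J"
      by (simp only: conc_iff cl_is_ext simp_thms)
    have Pcl: "P \<subseteq> ?cl" by (rule cl_ext[OF Osub])
    have clU: "?cl \<noteq> U"
    proof
      assume "?cl = U"
      hence "U \<subseteq> Y" using clY by simp
      moreover have "Y \<subseteq> U" using Ye[unfolded ext_iff] by (rule conjunct1)
      ultimately show False using YU by (simp add: subset_antisym)
    qed
    have "?r2 \<in> I_rules U M I N J"
      using oc cc Pcl On clU by (simp add: I_rules_def)
    moreover have "rule_implies ?r2 r" unfolding rr rule_implies_def using clY Pcl by simp
    ultimately have "?r2 = r" by (rule nec)
    hence eqr2: "?r2 = ((P, C), (Y, D))" unfolding rr .
    have "?cl = Y" using arg_cong[OF eqr2, of "\<lambda>r. fst (snd r)"] by simp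
    hence Yeq: "Y = ?cl" by (rule sym)
    have k: "\<Inter> (R2_class U M I N J Y) = down U N J (up U N J (dia U M I (box U M I Y)))"
      by (rule key[OF Ye])
    have eq1: "\<Inter> (R2_class U M I N J Y) = Y" unfolding k Oeq[symmetric] by (rule Yeq[symmetric])
    have "r = ((dia U M I (box U M I Y), box U M I Y),
      (\<Inter> (R2_class U M I N J Y), up U N J (\<Inter> (R2_class U M I N J Y))))"
      unfolding eq1 rr using Oeq Ceq D by simp
    moreover have "dia U M I (box U M I Y) \<noteq> {}" using On Oeq by simp
    ultimately show "r \<in> ?B" using Ye YU by (intro CollectI exI[where x=Y]) simp
  qed
  show "?B \<subseteq> ?A"
  proof
    fix r assume "r \<in> ?B"
    then obtain X where rr: "r = ((dia U M I (box U M I X), box U M I X),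
      (\<Inter> (R2_class U M I N J X), up U N J (\<Inter> (R2_class U M I N J X))))"
      and Xe: "X \<in> extents U N J" and XU: "X \<noteq> U" and On: "dia U M I (box U M I X) \<noteq> {}"
      by blast
    let ?P = "dia U M I (box U M I X)"
    let ?Y = "down U N J (up U N J ?P)"
    have Yeq: "\<Inter> (R2_class U M I N J X) = ?Y" using key[OF Xe] .
    have OY: "?P \<subseteq> ?Y" by (rule cl_ext[OF dia_sub])
    have YX: "?Y \<subseteq> X" using cl_min[OF Xe dia_box_sub] .
    have XsU: "X \<subseteq> U" using Xe[unfolded ext_iff] by (rule conjunct1)
    have YU: "?Y \<noteq> U"
    proof
      assume "?Y = U"
      hence "U \<subseteq> X" using YX by simp
      with XsU XU show False by (simp add: subset_antisym)
    qed
    have cY: "(?Y, up U N J ?Y) \<in> concepts U N J"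
      by (simp only: conc_iff cl_is_ext simp_thms)
    have rI: "r \<in> I_rules U M I N J"
      unfolding rr Yeq I_rules_def using oo_canon[of U M I X] cY OY On YU by simp
    moreover have "\<not> (\<exists>r1 \<in> I_rules U M I N J. r1 \<noteq> r \<and> rule_implies r1 r)"
    proof
      assume "\<exists>r1 \<in> I_rules U M I N J. r1 \<noteq> r \<and> rule_implies r1 r"
      then obtain O1 C1 Y1 D1 where r1: "((O1, C1), (Y1, D1)) \<in> I_rules U M I N J"
        and ne: "((O1, C1), (Y1, D1)) \<noteq> r" and imp: "rule_implies ((O1, C1), (Y1, D1)) r"
        by auto
      from r1 have oc: "(O1, C1) \<in> oo_concepts U M I" and yd: "(Y1, D1) \<in> concepts U N J"
        and O1Y1: "O1 \<subseteq> Y1" by (auto simp: I_rules_def)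
      from imp rr Yeq have a: "?P \<subseteq> O1" and b: "Y1 \<subseteq> ?Y" by (auto simp: rule_implies_def)
      have "O1 \<subseteq> X" using O1Y1 b YX by blast
      hence "O1 \<subseteq> ?P" by (rule oo_max[OF oc])
      hence O1eq: "O1 = ?P" using a by blast
      have C1eq: "C1 = box U M I X" using oo_box[OF oc] O1eq box_dia_box[of U M I X] by simp
      from yd have Y1e: "Y1 \<in> extents U N J" and D1: "D1 = up U N J Y1" by (auto simp: conc_iff)
      have "?P \<subseteq> Y1" using a O1Y1 by blast
      hence "?Y \<subseteq> Y1" by (rule cl_min[OF Y1e])
      hence "Y1 = ?Y" using b by blast
      with ne rr Yeq O1eq C1eq D1 show False by simp
    qed
    ultimately show "r \<in> ?A" by (simp add: necessary_I_rules_def)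
  qed
qed

end
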